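(* Let $A\in\mathbb{R}^{n\times m}$ with $n<m$ have nonzero columns $\alpha_1,\dots,\alpha_m$, let $c_{ij}=\langle\alpha_i,\alpha_j\rangle$, $\nu(i)=\max_{j\neq i}\frac{|c_{ij}|}{c_{ii}}$, and let $s$ be an integer with $1\le s\le m$. Let $k_{max}=\max_{\mathcal{T}\subseteq[m],|\mathcal{T}|=s}\Lambda_{max}(A_{\mathcal{T}}^TA_{\mathcal{T}})$ and $k_{min}=\min_{\mathcal{T}\subseteq[m],|\mathcal{T}|=s}\Lambda_{min}(A_{\mathcal{T}}^TA_{\mathcal{T}})$. Then $$\frac{k_{min}}{k_{max}}\ge\min_{h\neq l}\frac{c_{hh}}{c_{ll}}-2(s-1)\max_{i}\nu(i).$$
   Context: $[m]=\{1,\dots,m\}$. For $\mathcal{T}\subseteq[m]$, $A_{\mathcal{T}}$ is the submatrix of $A$ formed by the columns indexed by $\mathcal{T}$. $\Lambda_{max}(B)$, $\Lambda_{min}(B)$ denote the largest and smallest eigenvalues of a symmetric matrix $B$. The minimum is over $h,l\in[m]$ with $h\neq l$, and the maxima in $\nu(i)$ are over $j\in[m]\setminus\{i\}$. *)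

theory Defs
  imports "Jordan_Normal_Form.Char_Poly" "Jordan_Normal_Form.DL_Submatrix"
begin

text \<open>Columns are indexed 0..m-1 (instead of 1..m).\<close>

definition lambda_max :: "real mat \<Rightarrow> real" where
  "lambda_max B = Max {k. eigenvalue B k}"

definition lambda_min :: "real mat \<Rightarrow> real" where
  "lambda_min B = Min {k. eigenvalue B k}"

definition col_submat :: "real mat \<Rightarrow> nat set \<Rightarrow> real mat" where
  "col_submat A T = submatrix A {0..<dim_row A} T"

definition cc :: "real mat \<Rightarrow> nat \<Rightarrow> nat \<Rightarrow> real" where
  "cc A i j = col A i \<bullet> col A j"

definition nu :: "real mat \<Rightarrow> nat \<Rightarrow> real" where
  "nu A i = Max ((\<lambda>j. \<bar>cc A i j\<bar> / cc A i i) ` ({0..<dim_col A} - {i}))"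

definition k_max :: "real mat \<Rightarrow> nat \<Rightarrow> real" where
  "k_max A s = Max ((\<lambda>T. lambda_max ((col_submat A T)\<^sup>T * col_submat A T))
                    ` {T. T \<subseteq> {0..<dim_col A} \<and> card T = s})"

definition k_min :: "real mat \<Rightarrow> nat \<Rightarrow> real" where
  "k_min A s = Min ((\<lambda>T. lambda_min ((col_submat A T)\<^sup>T * col_submat A T))
                    ` {T. T \<subseteq> {0..<dim_col A} \<and> card T = s})"

end

theory Submission imports Defs "Jordan_Normal_Form.Spectral_Radius" begin


lemma eig_from_fun:
  fixes B :: "real mat"
  assumes B: "B \<in> carrier_mat k k" and i0: "i0 < k" "f i0 \<noteq> 0"
    and eq: "\<And>i. i < k \<Longrightarrow> (\<Sum>j=0..<k. B$$(i,j) * f j) = a * f i"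
  shows "eigenvalue B a"
proof -
  let ?w = "vec k f"
  have "eigenvector B ?w a"
    unfolding eigenvector_def
  proof (intro conjI)
    show "?w \<in> carrier_vec (dim_row B)" using B by auto
    show "?w \<noteq> 0\<^sub>v (dim_row B)" using B i0 by (metis carrier_matD(1) index_vec index_zero_vec(1))
    show "B *\<^sub>v ?w = a \<cdot>\<^sub>v ?w"
      by (rule eq_vecI, insert B eq, auto simp: scalar_prod_def)
  qed
  thus ?thesis unfolding eigenvalue_def by auto
qed



lemma sym_real_eig:
  fixes B :: "real mat"
  assumes B: "B \<in> carrier_mat k k" and k: "0 < k"
    and sym: "\<And>i j. i < k \<Longrightarrow> j < k \<Longrightarrow> B$$(i,j) = B$$(j,i)"
  shows "\<exists>a. eigenvalue B a"
proof -
  define Bc where "Bc = map_mat complex_of_real B"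
  have Bc: "Bc \<in> carrier_mat k k" using B unfolding Bc_def by auto
  from spectrum_non_empty[OF Bc k] obtain z where "eigenvalue Bc z"
    unfolding spectrum_def by auto
  then obtain v where ev: "eigenvector Bc v z" unfolding eigenvalue_def by auto
  hence v: "v \<in> carrier_vec k" "v \<noteq> 0\<^sub>v k" "Bc *\<^sub>v v = z \<cdot>\<^sub>v v"
    using Bc unfolding eigenvector_def by auto
  have eq1: "(\<Sum>j=0..<k. complex_of_real (B$$(i,j)) * v$j) = z * v$i" if i: "i < k" for i
  proof -
    have "(Bc *\<^sub>v v) $ i = (z \<cdot>\<^sub>v v) $ i" using v by simp
    also have "(Bc *\<^sub>v v) $ i = (\<Sum>j=0..<k. complex_of_real (B$$(i,j)) * v$j)"
      using i B v(1) Bc unfolding Bc_def by (auto simp: scalar_prod_def intro!: sum.cong)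
    also have "(z \<cdot>\<^sub>v v) $ i = z * v$i" using i v by simp
    finally show ?thesis .
  qed
  define x where "x j = Re (v$j)" for j
  define y where "y j = Im (v$j)" for j
  define a where "a = Re z"
  define b where "b = Im z"
  have ex: "(\<Sum>j=0..<k. B$$(i,j) * x j) = a * x i - b * y i" if i: "i < k" for i
  proof -
    have "Re (\<Sum>j=0..<k. complex_of_real (B$$(i,j)) * v$j) = Re (z * v$i)" using eq1[OF i] by simp
    thus ?thesis unfolding x_def y_def a_def b_def by (simp add: Re_sum)
  qed
  have ey: "(\<Sum>j=0..<k. B$$(i,j) * y j) = b * x i + a * y i" if i: "i < k" for i
  proof -
    have "Im (\<Sum>j=0..<k. complex_of_real (B$$(i,j)) * v$j) = Im (z * v$i)" using eq1[OF i] by simp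
    thus ?thesis unfolding x_def y_def a_def b_def by (simp add: Im_sum algebra_simps)
  qed
  have swap: "(\<Sum>i=0..<k. y i * (\<Sum>j=0..<k. B$$(i,j) * x j)) = (\<Sum>i=0..<k. x i * (\<Sum>j=0..<k. B$$(i,j) * y j))"
  proof -
    have "(\<Sum>i=0..<k. y i * (\<Sum>j=0..<k. B$$(i,j) * x j)) = (\<Sum>i=0..<k. \<Sum>j=0..<k. y i * B$$(i,j) * x j)"
      by (simp add: sum_distrib_left mult.assoc)
    also have "\<dots> = (\<Sum>j=0..<k. \<Sum>i=0..<k. y i * B$$(i,j) * x j)" by (rule sum.swap)
    also have "\<dots> = (\<Sum>j=0..<k. \<Sum>i=0..<k. x j * (B$$(j,i) * y i))"
      by (intro sum.cong refl, simp add: sym)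
    also have "\<dots> = (\<Sum>i=0..<k. x i * (\<Sum>j=0..<k. B$$(i,j) * y j))"
      by (simp add: sum_distrib_left)
    finally show ?thesis .
  qed
  have "(\<Sum>i=0..<k. y i * (a * x i - b * y i)) = (\<Sum>i=0..<k. x i * (b * x i + a * y i))"
    using swap ex ey by simp
  hence "a * (\<Sum>i=0..<k. x i * y i) - b * (\<Sum>i=0..<k. y i ^ 2) = b * (\<Sum>i=0..<k. x i ^ 2) + a * (\<Sum>i=0..<k. x i * y i)"
    by (simp add: algebra_simps sum_subtractf sum.distrib sum_distrib_left power2_eq_square)
  hence b0: "b * ((\<Sum>i=0..<k. x i ^ 2) + (\<Sum>i=0..<k. y i ^ 2)) = 0" by (simp add: algebra_simps)
  obtain i0 where i0: "i0 < k" "v $ i0 \<noteq> 0" using v by (metis eq_vecI carrier_vecD index_zero_vec)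
  hence xy: "x i0 \<noteq> 0 \<or> y i0 \<noteq> 0" unfolding x_def y_def using complex_eqI by force
  have "(\<Sum>i=0..<k. x i ^ 2) + (\<Sum>i=0..<k. y i ^ 2) > 0"
  proof -
    have "(\<Sum>i=0..<k. x i ^ 2 + y i ^ 2) > 0"
      by (rule sum_pos2[of _ i0], insert i0 xy, auto simp: add_pos_nonneg add_nonneg_pos)
    thus ?thesis by (simp add: sum.distrib)
  qed
  with b0 have "b = 0" by simp
  show ?thesis
  proof (cases "x i0 \<noteq> 0")
    case True
    show ?thesis by (rule exI, rule eig_from_fun[where f=x and a=a, OF B i0(1) True], insert ex \<open>b = 0\<close>, auto)
  next
    case False
    with xy have "y i0 \<noteq> 0" by auto
    show ?thesis by (rule exI, rule eig_from_fun[where f=y and a=a, OF B i0(1) \<open>y i0 \<noteq> 0\<close>], insert ey \<open>b = 0\<close>, auto)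
  qed
qed



lemma eig_finite:
  fixes B :: "real mat"
  assumes B: "B \<in> carrier_mat k k"
  shows "finite {a. eigenvalue B a}"
  using card_finite_spectrum(1)[OF B] unfolding spectrum_def by simp

lemma gram_eig_nonneg:
  fixes M :: "real mat"
  assumes M: "M \<in> carrier_mat r k" and e: "eigenvalue (transpose_mat M * M) a"
  shows "a \<ge> 0"
proof -
  have G: "transpose_mat M * M \<in> carrier_mat k k" using M by auto
  obtain v where v: "v \<in> carrier_vec k" "v \<noteq> 0\<^sub>v k" "(transpose_mat M * M) *\<^sub>v v = a \<cdot>\<^sub>v v"
    using e G unfolding eigenvalue_def eigenvector_def by auto
  have "(transpose_mat M * M) *\<^sub>v v = transpose_mat M *\<^sub>v (M *\<^sub>v v)"
    using M v by (auto intro: assoc_mult_mat_vec)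
  hence "(a \<cdot>\<^sub>v v) \<bullet> v = (transpose_mat M *\<^sub>v (M *\<^sub>v v)) \<bullet> v" using v by simp
  also have "\<dots> = (M *\<^sub>v v) \<bullet> (M *\<^sub>v v)"
    by (rule transpose_vec_mult_scalar[OF M v(1)], insert M v, auto)
  finally have eq: "a * (v \<bullet> v) = (M *\<^sub>v v) \<bullet> (M *\<^sub>v v)" using v by simp
  have nn: "w \<bullet> w \<ge> 0" for w :: "real vec"
    unfolding scalar_prod_def by (intro sum_nonneg, auto)
  obtain i0 where i0: "i0 < k" "v $ i0 \<noteq> 0" using v by (metis eq_vecI carrier_vecD index_zero_vec)
  have pos: "v \<bullet> v > 0" unfolding scalar_prod_def
    by (rule sum_pos2[of _ i0], insert i0 v, auto)
  show ?thesis using eq nn[of "M *\<^sub>v v"] pos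
    by (metis not_le mult_neg_pos)
qed

lemma gersh:
  fixes B :: "real mat"
  assumes B: "B \<in> carrier_mat k k" and e: "eigenvalue B a"
  shows "\<exists>i<k. \<bar>a - B$$(i,i)\<bar> \<le> (\<Sum>j\<in>{0..<k}-{i}. \<bar>B$$(i,j)\<bar>)"
proof -
  obtain v where v: "v \<in> carrier_vec k" "v \<noteq> 0\<^sub>v k" "B *\<^sub>v v = a \<cdot>\<^sub>v v"
    using e B unfolding eigenvalue_def eigenvector_def by auto
  obtain i0 where i0: "i0 < k" "v $ i0 \<noteq> 0" using v by (metis eq_vecI carrier_vecD index_zero_vec)
  have fin: "finite ((\<lambda>j. \<bar>v$j\<bar>) ` {0..<k})" "(\<lambda>j. \<bar>v$j\<bar>) ` {0..<k} \<noteq> {}" using i0 by auto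
  obtain i where i: "i < k" "\<bar>v$i\<bar> = Max ((\<lambda>j. \<bar>v$j\<bar>) ` {0..<k})"
    using Max_in[OF fin] by auto
  have mx: "\<bar>v$j\<bar> \<le> \<bar>v$i\<bar>" if "j < k" for j using i that fin by auto
  have vi: "\<bar>v$i\<bar> > 0" using mx[OF i0(1)] i0 by auto
  have row: "(\<Sum>j=0..<k. B$$(i,j) * v$j) = a * v$i"
  proof -
    have "(B *\<^sub>v v) $ i = (a \<cdot>\<^sub>v v) $ i" using v by simp
    also have "(B *\<^sub>v v) $ i = (\<Sum>j=0..<k. B$$(i,j) * v$j)"
      using i B v(1) by (auto simp: scalar_prod_def intro!: sum.cong)
    also have "(a \<cdot>\<^sub>v v) $ i = a * v$i" using i v by simp
    finally show ?thesis .
  qed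
  have split: "(\<Sum>j=0..<k. B$$(i,j) * v$j) = B$$(i,i) * v$i + (\<Sum>j\<in>{0..<k}-{i}. B$$(i,j) * v$j)"
    using i by (simp add: sum.remove)
  have "(a - B$$(i,i)) * v$i = (\<Sum>j\<in>{0..<k}-{i}. B$$(i,j) * v$j)"
    using row split by (simp add: algebra_simps)
  hence "\<bar>a - B$$(i,i)\<bar> * \<bar>v$i\<bar> = \<bar>\<Sum>j\<in>{0..<k}-{i}. B$$(i,j) * v$j\<bar>" by (metis abs_mult)
  also have "\<dots> \<le> (\<Sum>j\<in>{0..<k}-{i}. \<bar>B$$(i,j) * v$j\<bar>)" by (rule sum_abs)
  also have "\<dots> \<le> (\<Sum>j\<in>{0..<k}-{i}. \<bar>B$$(i,j)\<bar> * \<bar>v$i\<bar>)"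
    by (intro sum_mono, auto simp: abs_mult intro!: mult_left_mono mx)
  also have "\<dots> = (\<Sum>j\<in>{0..<k}-{i}. \<bar>B$$(i,j)\<bar>) * \<bar>v$i\<bar>" by (simp add: sum_distrib_right)
  finally have "\<bar>a - B$$(i,i)\<bar> \<le> (\<Sum>j\<in>{0..<k}-{i}. \<bar>B$$(i,j)\<bar>)"
    using vi by (simp add: mult_le_cancel_right)
  thus ?thesis using i by auto
qed



lemma arith_final:
  fixes m0 m1 ci cj x r :: real
  assumes "m0 \<ge> 0" "m1 \<ge> 0" "\<bar>m0 - ci\<bar> \<le> x * ci" "\<bar>m1 - cj\<bar> \<le> x * cj"
    "ci > 0" "cj > 0" "x \<ge> 0" "r \<le> ci / cj" "r \<le> 1"
  shows "m0 / m1 \<ge> r - 2 * x"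
proof (cases "r - 2 * x \<le> 0")
  case True
  thus ?thesis using assms(1,2) by (smt (verit) divide_nonneg_nonneg)
next
  case False
  hence x: "x < 1/2" and r: "r > 0" using assms by auto
  have m0: "m0 \<ge> ci * (1 - x)" using assms(3) by (auto simp: algebra_simps abs_le_iff)
  have m1: "m1 \<le> cj * (1 + x)" "m1 \<ge> cj * (1 - x)" using assms(4) by (auto simp: algebra_simps abs_le_iff)
  have "cj * (1 - x) > 0" using assms(6) x by (intro mult_pos_pos) auto
  hence m1p: "m1 > 0" using m1(2) by linarith
  have R: "r * cj \<le> ci" using assms(8) assms(6) by (simp add: pos_le_divide_eq)
  have "(r - 2*x) * m1 \<le> (r - 2*x) * (cj * (1 + x))"
    using False m1(1) by (intro mult_left_mono) auto
  also have "\<dots> = r * cj * (1 + x) - 2 * x * (1 + x) * cj" by (simp add: algebra_simps)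
  also have "\<dots> \<le> r * cj * (1 - x)"
  proof -
    have "r * cj \<le> (1 + x) * cj" using assms(9,6,7) by (intro mult_right_mono) auto
    hence "2 * x * (r * cj) \<le> 2 * x * ((1 + x) * cj)" using assms(7) by (intro mult_left_mono) auto
    thus ?thesis by (simp add: algebra_simps)
  qed
  also have "\<dots> \<le> ci * (1 - x)" using R x by (intro mult_right_mono) auto
  also have "\<dots> \<le> m0" by (rule m0)
  finally show ?thesis using m1p by (simp add: pos_le_divide_eq)
qed

lemma self_pos:
  fixes w :: "real vec"
  assumes "w \<in> carrier_vec k" "w \<noteq> 0\<^sub>v k"
  shows "w \<bullet> w > 0"
proof -
  obtain i0 where i0: "i0 < k" "w $ i0 \<noteq> 0" using assms by (metis eq_vecI carrier_vecD index_zero_vec)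
  show ?thesis unfolding scalar_prod_def
    by (rule sum_pos2[of _ i0], insert i0 assms, auto)
qed

lemma pick_upto: "k < n \<Longrightarrow> pick {0..<n} k = k"
proof -
  assume k: "k < n"
  have "{a\<in>{0..<n}. a < k} = {0..<k}" using k by auto
  with pick_card_in_set[of k "{0..<n}"] k show ?thesis by auto
qed

lemma sub_G:
  fixes A :: "real mat"
  assumes A: "A \<in> carrier_mat n m" and T: "T \<subseteq> {0..<m}" "card T = s"
  defines "M \<equiv> col_submat A T"
  shows "M \<in> carrier_mat n s"
    and "\<And>a b. a < s \<Longrightarrow> b < s \<Longrightarrow> (transpose_mat M * M) $$ (a,b) = cc A (pick T a) (pick T b)"
    and "\<And>a. a < s \<Longrightarrow> pick T a \<in> T"
    and "\<And>a b. a < s \<Longrightarrow> b < s \<Longrightarrow> a \<noteq> b \<Longrightarrow> pick T a \<noteq> pick T b"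
proof -
  have "{i. i < dim_row A \<and> i \<in> {0..<dim_row A}} = {0..<n}" using A by auto
  hence c1: "card {i. i < dim_row A \<and> i \<in> {0..<dim_row A}} = n" by simp
  have "{j. j < dim_col A \<and> j \<in> T} = T" using A T by auto
  hence c2: "card {j. j < dim_col A \<and> j \<in> T} = s" using T by simp
  have d1: "dim_row M = n" unfolding M_def col_submat_def dim_submatrix(1) by (rule c1)
  have d2: "dim_col M = s" unfolding M_def col_submat_def dim_submatrix(2) by (rule c2)
  show Mc: "M \<in> carrier_mat n s" using d1 d2 by (rule carrier_matI)
  show pin: "\<And>a. a < s \<Longrightarrow> pick T a \<in> T" proof -
    fix a assume "a < s" thus "pick T a \<in> T" using T(2) pick_in_set_le[of a T] by simp
  qed
  show "\<And>a b. a < s \<Longrightarrow> b < s \<Longrightarrow> a \<noteq> b \<Longrightarrow> pick T a \<noteq> pick T b"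
  proof -
    fix a b assume ab: "a < s" "b < s" "a \<noteq> b"
    show "pick T a \<noteq> pick T b"
    proof (cases "a < b")
      case True
      thus ?thesis using pick_mono_le[of b T a] ab T by simp
    next
      case False
      hence "b < a" using ab by simp
      thus ?thesis using pick_mono_le[of a T b] ab T by simp
    qed
  qed
  have colM: "col M a = col A (pick T a)" if a: "a < s" for a
  proof (rule eq_vecI)
    show "dim_vec (col M a) = dim_vec (col A (pick T a))" using Mc A by auto
    fix k assume "k < dim_vec (col A (pick T a))"
    hence k: "k < n" using A by auto
    have kA: "k < dim_row A" using k carrier_matD(1)[OF A] by (simp only:)
    have pa: "pick T a < dim_col A" using pin[OF a] T(1) carrier_matD(2)[OF A] by auto
    have "col M a $ k = M $$ (k, a)" by (rule index_col, simp_all add: d1 d2 k a)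
    also have "\<dots> = A $$ (pick {0..<dim_row A} k, pick T a)" unfolding M_def col_submat_def
      by (rule submatrix_index, simp_all only: c1 c2 k a)
    also have "pick {0..<dim_row A} k = k" by (rule pick_upto[OF kA])
    also have "A $$ (k, pick T a) = col A (pick T a) $ k" by (rule index_col[symmetric, OF kA pa])
    finally show "col M a $ k = col A (pick T a) $ k" .
  qed
  show "\<And>a b. a < s \<Longrightarrow> b < s \<Longrightarrow> (transpose_mat M * M) $$ (a,b) = cc A (pick T a) (pick T b)"
  proof -
    fix a b assume ab: "a < s" "b < s"
    have rt: "row (transpose_mat M) a = col M a" using Mc ab by (simp add: row_transpose)
    have "(transpose_mat M * M) $$ (a,b) = row (transpose_mat M) a \<bullet> col M b"
      by (rule index_mult_mat(1), insert Mc ab, auto)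
    also have "\<dots> = col A (pick T a) \<bullet> col A (pick T b)" unfolding rt colM[OF ab(1)] colM[OF ab(2)] ..
    finally show "(transpose_mat M * M) $$ (a,b) = cc A (pick T a) (pick T b)"
      unfolding cc_def .
  qed
qed



lemma key:
  fixes A :: "real mat"
  assumes A: "A \<in> carrier_mat n m" and T: "T \<subseteq> {0..<m}" "card T = s"
    and cpos: "\<And>j. j < m \<Longrightarrow> cc A j j > 0"
    and Nge: "\<And>i. i < m \<Longrightarrow> nu A i \<le> N"
    and nuge: "\<And>i j. i < m \<Longrightarrow> j < m \<Longrightarrow> j \<noteq> i \<Longrightarrow> \<bar>cc A i j\<bar> \<le> nu A i * cc A i i"
    and e: "eigenvalue (transpose_mat (col_submat A T) * col_submat A T) \<mu>"
  shows "\<exists>i<m. \<bar>\<mu> - cc A i i\<bar> \<le> (real s - 1) * N * cc A i i"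
proof -
  define M where "M = col_submat A T"
  define G where "G = transpose_mat M * M"
  note sg = sub_G[OF A T, folded M_def]
  have G: "G \<in> carrier_mat s s" unfolding G_def using sg(1) by auto
  from gersh[OF G e[folded M_def, folded G_def]] obtain a where
    a: "a < s" "\<bar>\<mu> - G$$(a,a)\<bar> \<le> (\<Sum>b\<in>{0..<s}-{a}. \<bar>G$$(a,b)\<bar>)" by auto
  define i where "i = pick T a"
  have im: "i < m" using sg(3)[OF a(1)] T unfolding i_def by auto
  have Gaa: "G$$(a,a) = cc A i i" unfolding G_def i_def using sg(2)[OF a(1) a(1)] .
  have "(\<Sum>b\<in>{0..<s}-{a}. \<bar>G$$(a,b)\<bar>) \<le> (\<Sum>b\<in>{0..<s}-{a}. N * cc A i i)"
  proof (rule sum_mono)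
    fix b assume b: "b \<in> {0..<s}-{a}"
    hence bs: "b < s" "b \<noteq> a" by auto
    have "G$$(a,b) = cc A i (pick T b)" unfolding G_def i_def using sg(2)[OF a(1) bs(1)] .
    moreover have "pick T b < m" using sg(3)[OF bs(1)] T by auto
    moreover have "pick T b \<noteq> i" unfolding i_def using sg(4)[OF bs(1) a(1) bs(2)] .
    ultimately have "\<bar>G$$(a,b)\<bar> \<le> nu A i * cc A i i" using nuge[OF im] by simp
    also have "\<dots> \<le> N * cc A i i" using Nge[OF im] cpos[OF im] by (intro mult_right_mono) auto
    finally show "\<bar>G$$(a,b)\<bar> \<le> N * cc A i i" .
  qed
  also have "\<dots> = (real s - 1) * N * cc A i i"
    using a(1) by (simp add: of_nat_diff)
  finally show ?thesis using a(2) Gaa im by auto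
qed



theorem theorem2:
  fixes A :: "real mat" and n m s :: nat
  assumes "A \<in> carrier_mat n m" and "n < m"
    and "\<forall>j<m. col A j \<noteq> 0\<^sub>v n"
    and "1 \<le> s" and "s \<le> m"
  shows "k_min A s / k_max A s \<ge>
           Min {cc A h h / cc A l l | h l. h < m \<and> l < m \<and> h \<noteq> l}
           - 2 * (real s - 1) * Max (nu A ` {0..<m})"
proof -
  note A = assms(1)
  have dc: "dim_col A = m" "dim_row A = n" using A by auto
  have m2: "m \<ge> 2"
  proof (rule ccontr)
    assume "\<not> m \<ge> 2"
    hence "m = 1" "n = 0" using assms(2) by auto
    hence "col A 0 = 0\<^sub>v n" using A by (intro eq_vecI) auto
    thus False using assms(3) \<open>m = 1\<close> by auto
  qed
  have cpos: "cc A j j > 0" if "j < m" for j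
    unfolding cc_def by (rule self_pos[of _ n], insert A assms(3) that, auto)
  have ccsym: "cc A i j = cc A j i" if "i < m" "j < m" for i j
    unfolding cc_def by (rule comm_scalar_prod[of _ n], insert A that, auto)
  have nuge: "\<bar>cc A i j\<bar> \<le> nu A i * cc A i i" if ij: "i < m" "j < m" "j \<noteq> i" for i j
  proof -
    have "\<bar>cc A i j\<bar> / cc A i i \<le> nu A i" unfolding nu_def dc
      by (rule Max_ge, insert ij, auto)
    thus ?thesis using cpos[OF ij(1)] by (simp add: pos_divide_le_eq)
  qed
  define N where "N = Max (nu A ` {0..<m})"
  have Nge: "nu A i \<le> N" if "i < m" for i unfolding N_def by (rule Max_ge, insert that, auto)
  have N0: "N \<ge> 0"
  proof -
    have "0 \<le> \<bar>cc A 0 1\<bar> / cc A 0 0" using cpos[of 0] m2 by auto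
    also have "\<dots> \<le> nu A 0" unfolding nu_def dc by (rule Max_ge, insert m2, auto)
    also have "\<dots> \<le> N" using Nge[of 0] m2 by auto
    finally show ?thesis .
  qed
  define x where "x = (real s - 1) * N"
  have x0: "x \<ge> 0" unfolding x_def using N0 assms(4) by auto
  define RS where "RS = {cc A h h / cc A l l | h l. h < m \<and> l < m \<and> h \<noteq> l}"
  define r where "r = Min RS"
  have finRS: "finite RS"
  proof -
    have "RS \<subseteq> (\<lambda>(h,l). cc A h h / cc A l l) ` ({0..<m} \<times> {0..<m})" unfolding RS_def by auto
    thus ?thesis by (rule finite_subset, auto)
  qed
  have rle: "r \<le> cc A h h / cc A l l" if "h < m" "l < m" "h \<noteq> l" for h l
    unfolding r_def by (rule Min_le[OF finRS], unfold RS_def, insert that, auto)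
  have r1: "r \<le> 1"
  proof -
    have "r \<le> cc A 0 0 / cc A 1 1" "r \<le> cc A 1 1 / cc A 0 0" using rle m2 by auto
    moreover have "cc A 0 0 / cc A 1 1 \<le> 1 \<or> cc A 1 1 / cc A 0 0 \<le> 1"
      using cpos[of 0] cpos[of 1] m2 by (auto simp: divide_le_eq_1)
    ultimately show ?thesis by linarith
  qed
  have rle2: "r \<le> cc A h h / cc A l l" if "h < m" "l < m" for h l
    using rle[OF that] r1 cpos[OF that(1)] by (cases "h = l") auto
  define ST where "ST = {T. T \<subseteq> {0..<m} \<and> card T = s}"
  have finST: "finite ST" unfolding ST_def by (rule finite_subset[of _ "Pow {0..<m}"]) auto
  have "{0..<s} \<in> ST" unfolding ST_def using assms(5) by auto
  hence neST: "ST \<noteq> {}" by auto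
  define G where "G T = transpose_mat (col_submat A T) * col_submat A T" for T
  have Gc: "G T \<in> carrier_mat s s" if "T \<in> ST" for T
    using sub_G(1)[OF A, of T s] that unfolding G_def ST_def by auto
  have Efin: "finite {a. eigenvalue (G T) a}" if "T \<in> ST" for T by (rule eig_finite[OF Gc[OF that]])
  have Ene: "{a. eigenvalue (G T) a} \<noteq> {}" if T: "T \<in> ST" for T
  proof -
    have TT: "T \<subseteq> {0..<m}" "card T = s" using T unfolding ST_def by auto
    have "\<exists>a. eigenvalue (G T) a"
    proof (rule sym_real_eig[OF Gc[OF T]])
      show "0 < s" using assms(4) by auto
      fix i j assume ij: "i < s" "j < s"
      have "pick T i \<in> T" "pick T j \<in> T" using sub_G(3)[OF A TT] ij by auto
      hence pm: "pick T i < m" "pick T j < m" using TT(1) by auto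
      show "G T $$ (i,j) = G T $$ (j,i)" unfolding G_def
        using sub_G(2)[OF A TT ij] sub_G(2)[OF A TT ij(2) ij(1)] ccsym[OF pm] by simp
    qed
    thus ?thesis by auto
  qed
  have pr: "\<exists>i<m. \<mu> \<ge> 0 \<and> \<bar>\<mu> - cc A i i\<bar> \<le> x * cc A i i"
    if T: "T \<in> ST" and e: "eigenvalue (G T) \<mu>" for T \<mu>
  proof -
    have TT: "T \<subseteq> {0..<m}" "card T = s" using T unfolding ST_def by auto
    have "\<mu> \<ge> 0" using gram_eig_nonneg[OF sub_G(1)[OF A TT]] e unfolding G_def by auto
    moreover obtain i where "i < m" "\<bar>\<mu> - cc A i i\<bar> \<le> (real s - 1) * N * cc A i i"
      using key[OF A TT cpos Nge nuge, of \<mu>] e unfolding G_def by auto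
    ultimately show ?thesis unfolding x_def by auto
  qed
  have kmin: "\<exists>T\<in>ST. k_min A s = lambda_min (G T)"
    unfolding k_min_def dc G_def[symmetric] ST_def[symmetric]
  proof -
    have "Min ((\<lambda>T. lambda_min (G T)) ` ST) \<in> (\<lambda>T. lambda_min (G T)) ` ST"
      by (rule Min_in, insert finST neST, auto)
    thus "\<exists>T\<in>ST. Min ((\<lambda>T. lambda_min (G T)) ` ST) = lambda_min (G T)" by auto
  qed
  then obtain T0 where T0: "T0 \<in> ST" "k_min A s = lambda_min (G T0)" by auto
  have kmax: "\<exists>T\<in>ST. k_max A s = lambda_max (G T)"
    unfolding k_max_def dc G_def[symmetric] ST_def[symmetric]
  proof -
    have "Max ((\<lambda>T. lambda_max (G T)) ` ST) \<in> (\<lambda>T. lambda_max (G T)) ` ST"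
      by (rule Max_in, insert finST neST, auto)
    thus "\<exists>T\<in>ST. Max ((\<lambda>T. lambda_max (G T)) ` ST) = lambda_max (G T)" by auto
  qed
  then obtain T1 where T1: "T1 \<in> ST" "k_max A s = lambda_max (G T1)" by auto
  have e0: "eigenvalue (G T0) (k_min A s)" unfolding T0(2) lambda_min_def
    using Min_in[OF Efin[OF T0(1)] Ene[OF T0(1)]] by simp
  have e1: "eigenvalue (G T1) (k_max A s)" unfolding T1(2) lambda_max_def
    using Max_in[OF Efin[OF T1(1)] Ene[OF T1(1)]] by simp
  obtain i where i: "i < m" "k_min A s \<ge> 0" "\<bar>k_min A s - cc A i i\<bar> \<le> x * cc A i i"
    using pr[OF T0(1) e0] by auto
  obtain j where j: "j < m" "k_max A s \<ge> 0" "\<bar>k_max A s - cc A j j\<bar> \<le> x * cc A j j"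
    using pr[OF T1(1) e1] by auto
  have "k_min A s / k_max A s \<ge> r - 2 * x"
    by (rule arith_final[OF i(2) j(2) i(3) j(3) cpos[OF i(1)] cpos[OF j(1)] x0 rle2[OF i(1) j(1)] r1])
  thus ?thesis unfolding r_def RS_def x_def N_def by (simp add: algebra_simps)
qed


end
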